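(* Let $y_1=x_2x_1x_2^{-1}$. For every integer $n\ge1$, $x_1^n$ has one of the forms $M_0([23,224,138],[59,136,495],\dots)$, $M_0([23,224,138],[28,88,341],\dots)$, $M_{2^r-1}([39,208,186],[0,0,0],\dots)$ for some odd $r\ge1$, or $M_{2^r-1}([23,224,138],[0,0,0],\dots)$ for some even $r\ge2$; and for every $n\ge1$, $y_1^n$ has one of the forms $M_0([23,224,138],[33,146,501],\dots)$, $M_0([23,224,138],[6,66,335],\dots)$, $M_{2^r-1}([39,208,186],[0,106,247],\dots)$ for some odd $r\ge1$, or $M_{2^r-1}([23,224,138],[26,26,26],\dots)$ for some even $r\ge2$.
   Context: Consider infinite upper unitriangular block matrices $X=(X_{r,s})_{r,s\ge1}$ whose entries are $3\times3$ matrices over $\mathbb F_2$, with $X_{r,r}=I$, $X_{r,s}=0$ for $s<r$, and whose upper diagonals are $3$-periodic: for each $j\ge1$ there are $a_{j1},a_{j2},a_{j3}\in M(3,\mathbb F_2)$ with $X_{r,r+j}=a_{j,i}$, where $i\in\{1,2,3\}$, $i\equiv r\pmod 3$; $a_j=[a_{j1},a_{j2},a_{j3}]$ is the $j$-th upper diagonal. For $l\ge0$, $M_l(c_1,c_2,\dots)$ denotes such a matrix whose first $l$ upper diagonals are zero and whose $(l+1)$-st, $(l+2)$-nd, $\dots$ upper diagonals are $c_1,c_2,\dots$; diagonals hidden in "$\dots$" are unspecified, while a matrix written $M_0(c_1,\dots,c_m)$ without dots has all further diagonals zero. A matrix $u=(u_{pq})\in M(3,\mathbb F_2)$ is encoded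 by the integer $256u_{11}+128u_{12}+64u_{13}+32u_{21}+16u_{22}+8u_{23}+4u_{31}+2u_{32}+u_{33}$, and a diagonal by the triple of integers of its three blocks. The elements are $x_1=M_0([23,224,138],[59,136,495],[26,488,227],[23,224,0],[59,0,0])$, $x_2=M_0([46,68,217],[12,194,363],[26,326,77],[46,68,0],[12,0,0])$. *)

theory Defs
  imports "HOL-Analysis.Analysis" "HOL-Library.Z2"
begin

text \<open>3x3 matrices over F_2 (rows/columns indexed 1,2,3 of the numeral type 3).\<close>
type_synonym m3 = "bit ^ 3 ^ 3"

text \<open>Infinite block matrices, block indices r, s >= 1 (index 0 is unused and kept zero).\<close>
type_synonym bm = "nat \<Rightarrow> nat \<Rightarrow> m3"

text \<open>Decoding an integer code 256u11+128u12+...+u33 into a 3x3 matrix.\<close>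
definition bitc :: "nat \<Rightarrow> nat \<Rightarrow> bit" where
  "bitc c k = (if odd (c div 2 ^ k) then 1 else 0)"

definition dec :: "nat \<Rightarrow> m3" where
  "dec c = vector [vector [bitc c 8, bitc c 7, bitc c 6],
                   vector [bitc c 5, bitc c 4, bitc c 3],
                   vector [bitc c 2, bitc c 1, bitc c 0]]"

text \<open>A diagonal: triple of codes of its three blocks a_{j1}, a_{j2}, a_{j3}.\<close>
type_synonym diag = "nat \<times> nat \<times> nat"

definition dblock :: "diag \<Rightarrow> nat \<Rightarrow> m3" where
  "dblock d i = (case d of (a, b, c) \<Rightarrow> if i = 1 then dec a else if i = 2 then dec b else dec c)"

definition pidx :: "nat \<Rightarrow> nat" where
  "pidx r = (r - 1) mod 3 + 1"

definition UT :: "bm set" where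
  "UT = {X. \<forall>r s. ((r = 0 \<or> s = 0 \<or> s < r) \<longrightarrow> X r s = 0) \<and> (1 \<le> r \<longrightarrow> X r r = mat 1)}"

definition G :: "bm set" where
  "G = {X \<in> UT. \<forall>r s. 1 \<le> r \<longrightarrow> r \<le> s \<longrightarrow> X (r + 3) (s + 3) = X r s}"

definition bone :: bm where
  "bone r s = (if 1 \<le> r \<and> r = s then mat 1 else 0)"

definition bmul :: "bm \<Rightarrow> bm \<Rightarrow> bm" where
  "bmul X Y r s = (\<Sum>t\<in>{r..s}. X r t ** Y t s)"

primrec bpow :: "bm \<Rightarrow> nat \<Rightarrow> bm" where
  "bpow X 0 = bone"
| "bpow X (Suc n) = bmul X (bpow X n)"

definition binv :: "bm \<Rightarrow> bm" where
  "binv X = (THE Y. Y \<in> UT \<and> bmul X Y = bone)"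

text \<open>M_0(c_1,...,c_m) with all further diagonals zero.\<close>
definition Mfin :: "diag list \<Rightarrow> bm" where
  "Mfin cs r s = (if r = 0 \<or> s = 0 \<or> s < r then 0
                  else if r = s then mat 1
                  else if s - r \<le> length cs then dblock (cs ! (s - r - 1)) (pidx r)
                  else 0)"

definition has_diag :: "bm \<Rightarrow> nat \<Rightarrow> diag \<Rightarrow> bool" where
  "has_diag X j d = (\<forall>r\<ge>1. X r (r + j) = dblock d (pidx r))"

text \<open>X is of the form M_l(c_1,...,c_m,...): an element of the group whose first l upper
  diagonals vanish and whose (l+1)-st,...,(l+m)-th upper diagonals are c_1,...,c_m
  (further diagonals unspecified).\<close>
definition isM :: "bm \<Rightarrow> nat \<Rightarrow> diag list \<Rightarrow> bool" where
  "isM X l cs = (X \<in> G \<and> (\<forall>j\<in>{1..l}. \<forall>r\<ge>1. X r (r + j) = 0)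
                 \<and> (\<forall>i<length cs. has_diag X (l + 1 + i) (cs ! i)))"

definition x1 :: bm where
  "x1 = Mfin [(23,224,138),(59,136,495),(26,488,227),(23,224,0),(59,0,0)]"

definition x2 :: bm where
  "x2 = Mfin [(46,68,217),(12,194,363),(26,326,77),(46,68,0),(12,0,0)]"

definition y1 :: bm where
  "y1 = bmul (bmul x2 x1) (binv x2)"

end

theory Submission
  imports Defs
begin


lemma bit_add_self[simp]: "(x::bit) + x = 0"
  by (metis bit_not_zero_iff add_0 one_add_one bit_2_eq_0)
lemma m3_add_self[simp]: "(a::m3) + a = 0"
  by (simp add: vec_eq_iff)
lemma m3_add_self2[simp]: "(a::m3) + (a + b) = b"
  by (simp add: add.assoc[symmetric])

lemma m3_two[simp]: "2 * (a::m3) = 0"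
  by (metis m3_add_self mult_2)

lemma mm_sum_right: "(A::m3) ** sum f S = (\<Sum>i\<in>S. A ** f i)"
  by (induct S rule: infinite_finite_induct) (simp_all add: matrix_add_ldistrib)
lemma mm_add_rdistrib: fixes A :: "'a::semiring_1^'n^'m" shows "(A + B) ** C = A ** C + B ** C"
  by (simp add: vec_eq_iff matrix_matrix_mult_def sum.distrib distrib_right)
lemma mm_sum_left: "sum f S ** (A::m3) = (\<Sum>i\<in>S. f i ** A)"
  by (induct S rule: infinite_finite_induct) (simp_all add: mm_add_rdistrib)

lemma bmul_assoc: "bmul (bmul X Y) Z = bmul X (bmul Y Z)"
proof (intro ext)
  fix r s
  have "bmul (bmul X Y) Z r s = (\<Sum>t\<in>{r..s}. \<Sum>u\<in>{r..t}. (X r u ** Y u t) ** Z t s)"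
    by (simp add: bmul_def mm_sum_left)
  also have "\<dots> = (\<Sum>t\<in>{r..s}. \<Sum>u\<in>{r..s}. if u \<le> t then (X r u ** Y u t) ** Z t s else 0)"
  proof (rule sum.cong[OF refl])
    fix t assume t: "t \<in> {r..s}"
    have "(\<Sum>u\<in>{r..s}. if u \<le> t then (X r u ** Y u t) ** Z t s else 0)
       = (\<Sum>u\<in>{r..s} \<inter> {u. u \<le> t}. (X r u ** Y u t) ** Z t s)"
      by (simp add: sum.inter_restrict)
    also have "{r..s} \<inter> {u. u \<le> t} = {r..t}" using t by auto
    finally show "(\<Sum>u\<in>{r..t}. (X r u ** Y u t) ** Z t s) = (\<Sum>u\<in>{r..s}. if u \<le> t then (X r u ** Y u t) ** Z t s else 0)" by simp
  qed
  also have "\<dots> = (\<Sum>u\<in>{r..s}. \<Sum>t\<in>{r..s}. if u \<le> t then (X r u ** Y u t) ** Z t s else 0)"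
    by (rule sum.swap)
  also have "\<dots> = (\<Sum>u\<in>{r..s}. \<Sum>t\<in>{u..s}. X r u ** (Y u t ** Z t s))"
  proof (rule sum.cong[OF refl])
    fix u assume u: "u \<in> {r..s}"
    have "(\<Sum>t\<in>{r..s}. if u \<le> t then (X r u ** Y u t) ** Z t s else 0)
       = (\<Sum>t\<in>{r..s} \<inter> {t. u \<le> t}. (X r u ** Y u t) ** Z t s)"
      by (simp add: sum.inter_restrict)
    also have "{r..s} \<inter> {t. u \<le> t} = {u..s}" using u by auto
    finally show "(\<Sum>t\<in>{r..s}. if u \<le> t then (X r u ** Y u t) ** Z t s else 0) = (\<Sum>t\<in>{u..s}. X r u ** (Y u t ** Z t s))"
      by (simp add: matrix_mul_assoc)
  qed
  also have "\<dots> = bmul X (bmul Y Z) r s"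
    by (simp add: bmul_def mm_sum_right)
  finally show "bmul (bmul X Y) Z r s = bmul X (bmul Y Z) r s" .
qed

lemma UT_zero: "X \<in> UT \<Longrightarrow> (r = 0 \<or> s = 0 \<or> s < r) \<Longrightarrow> X r s = 0"
  unfolding UT_def by blast
lemma UT_one: "X \<in> UT \<Longrightarrow> 1 \<le> r \<Longrightarrow> X r r = mat 1"
  by (simp add: UT_def)

lemma bmul_bone_left: "X \<in> UT \<Longrightarrow> bmul bone X = X"
proof (intro ext)
  fix r s assume X: "X \<in> UT"
  show "bmul bone X r s = X r s"
  proof (cases "r \<le> s")
    case True
    have "bmul bone X r s = (\<Sum>t\<in>{r..s}. if t = r then bone r r ** X r s else 0)"
      unfolding bmul_def by (rule sum.cong) (auto simp: bone_def)
    also have "\<dots> = bone r r ** X r s" using True by simp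
    also have "\<dots> = X r s" using X by (cases "r = 0") (auto simp: bone_def UT_zero)
    finally show ?thesis .
  next
    case False thus ?thesis using X by (simp add: bmul_def UT_zero)
  qed
qed

lemma bmul_bone_right: "X \<in> UT \<Longrightarrow> bmul X bone = X"
proof (intro ext)
  fix r s assume X: "X \<in> UT"
  show "bmul X bone r s = X r s"
  proof (cases "r \<le> s")
    case True
    have "bmul X bone r s = (\<Sum>t\<in>{r..s}. if t = s then X r s ** bone s s else 0)"
      unfolding bmul_def by (rule sum.cong) (auto simp: bone_def)
    also have "\<dots> = X r s ** bone s s" using True by simp
    also have "\<dots> = X r s" using X by (cases "s = 0") (auto simp: bone_def UT_zero)
    finally show ?thesis .
  next
    case False thus ?thesis using X by (simp add: bmul_def UT_zero)
  qed
qed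

lemma bmul_UT: "X \<in> UT \<Longrightarrow> Y \<in> UT \<Longrightarrow> bmul X Y \<in> UT"
  unfolding UT_def bmul_def by auto

lemma bone_UT: "bone \<in> UT" by (auto simp: UT_def bone_def)
lemma bone_G: "bone \<in> G" by (auto simp: G_def bone_UT bone_def)

lemma bmul_G: assumes X: "X \<in> G" and Y: "Y \<in> G" shows "bmul X Y \<in> G"
proof -
  have XU: "X \<in> UT" and YU: "Y \<in> UT" using X Y by (auto simp: G_def)
  have "bmul X Y (r + 3) (s + 3) = bmul X Y r s" if "1 \<le> r" "r \<le> s" for r s
  proof -
    have "bmul X Y (r + 3) (s + 3) = (\<Sum>t\<in>{r..s}. X (r+3) (t+3) ** Y (t+3) (s+3))"
      unfolding bmul_def using sum.shift_bounds_cl_nat_ivl[of "\<lambda>t. X (r+3) t ** Y t (s+3)" r 3 s]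
      by simp
    also have "\<dots> = bmul X Y r s" unfolding bmul_def
      by (rule sum.cong) (use X Y that in \<open>auto simp: G_def\<close>)
    finally show ?thesis .
  qed
  thus ?thesis using bmul_UT[OF XU YU] by (auto simp: G_def)
qed

lemma bpow_G: "X \<in> G \<Longrightarrow> bpow X n \<in> G"
  by (induct n) (auto simp: bone_G bmul_G)
lemma G_UT: "X \<in> G \<Longrightarrow> X \<in> UT" by (simp add: G_def)
lemma bpow_UT: "X \<in> UT \<Longrightarrow> bpow X n \<in> UT"
  by (induct n) (auto simp: bone_UT bmul_UT)

lemma bpow_add: "X \<in> UT \<Longrightarrow> bpow X (m + n) = bmul (bpow X m) (bpow X n)"
  by (induct m) (simp_all add: bmul_bone_left bpow_UT bmul_assoc)
lemma bpow_mult: "X \<in> UT \<Longrightarrow> bpow X (m * n) = bpow (bpow X m) n"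
  by (induct n) (simp_all add: bpow_add)
lemma bpow_2: "X \<in> UT \<Longrightarrow> bpow X 2 = bmul X X"
  by (simp add: numeral_2_eq_2 bmul_bone_right)

lemma prod_diag: "bmul X Y r (r + j) = (\<Sum>i\<in>{0..j}. X r (r + i) ** Y (r + i) (r + j))"
  unfolding bmul_def using sum.shift_bounds_cl_nat_ivl[of "\<lambda>t. X r t ** Y t (r + j)" 0 r j]
  by (simp add: add.commute)

lemma sum_split_first: "r \<le> s \<Longrightarrow> sum f {r..s} = f r + sum f {Suc r..s}"
  by (simp add: sum.atLeast_Suc_atMost)

lemma column_exists:
  assumes X: "X \<in> UT"
  shows "\<exists>c. c s = mat 1 \<and> (\<forall>t. (t < s - d \<or> s < t) \<longrightarrow> c t = 0)
           \<and> (\<forall>r. s - d \<le> r \<and> 1 \<le> r \<and> r < s \<longrightarrow> (\<Sum>t\<in>{r..s}. X r t ** c t) = 0)"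
proof (induct d)
  case 0
  show ?case
    by (rule exI[of _ "\<lambda>t. if t = s then mat 1 else 0"]) auto
next
  case (Suc d)
  then obtain c where c1: "c s = mat 1" and c2: "\<forall>t. (t < s - d \<or> s < t) \<longrightarrow> c t = 0"
    and c3: "\<forall>r. s - d \<le> r \<and> 1 \<le> r \<and> r < s \<longrightarrow> (\<Sum>t\<in>{r..s}. X r t ** c t) = 0" by blast
  show ?case
  proof (cases "s - Suc d = 0")
    case True
    thus ?thesis using c1 c2 c3 by (intro exI[of _ c]) auto
  next
    case False
    define p where "p = s - Suc d"
    have p1: "1 \<le> p" and ps: "p < s" and pd: "s - d = Suc p" using False by (auto simp: p_def)
    define c' where "c' = c(p := - (\<Sum>t\<in>{Suc p..s}. X p t ** c t))"
    have e1: "c' s = mat 1" using c1 ps by (simp add: c'_def)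
    have e2: "\<forall>t. (t < s - Suc d \<or> s < t) \<longrightarrow> c' t = 0"
      using c2 p1 ps pd by (auto simp: c'_def p_def)
    have e3: "(\<Sum>t\<in>{r..s}. X r t ** c' t) = 0" if r: "s - Suc d \<le> r" "1 \<le> r" "r < s" for r
    proof (cases "r = p")
      case True
      have "(\<Sum>t\<in>{r..s}. X r t ** c' t) = X p p ** c' p + (\<Sum>t\<in>{Suc p..s}. X p t ** c' t)"
        using True ps by (simp add: sum_split_first)
      also have "(\<Sum>t\<in>{Suc p..s}. X p t ** c' t) = (\<Sum>t\<in>{Suc p..s}. X p t ** c t)"
        by (rule sum.cong) (auto simp: c'_def)
      also have "X p p = mat 1" using X p1 by (simp add: UT_one)
      finally show ?thesis by (simp add: c'_def)
    next
      case False
      hence "s - d \<le> r" using r pd p_def by auto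
      hence "(\<Sum>t\<in>{r..s}. X r t ** c t) = 0" using c3 r by auto
      moreover have "(\<Sum>t\<in>{r..s}. X r t ** c' t) = (\<Sum>t\<in>{r..s}. X r t ** c t)"
        by (rule sum.cong) (use \<open>s - d \<le> r\<close> pd in \<open>auto simp: c'_def\<close>)
      ultimately show ?thesis by simp
    qed
    show ?thesis using e1 e2 e3 by blast
  qed
qed

lemma inv_exists:
  assumes X: "X \<in> UT"
  shows "\<exists>Y\<in>UT. bmul X Y = bone"
proof -
  have "\<forall>s. \<exists>c. c s = mat 1 \<and> (\<forall>t. s < t \<longrightarrow> c t = 0)
           \<and> (\<forall>r. 1 \<le> r \<and> r < s \<longrightarrow> (\<Sum>t\<in>{r..s}. X r t ** c t) = 0)"
  proof
    fix s
    from column_exists[OF X, of s s] show "\<exists>c. c s = mat 1 \<and> (\<forall>t. s < t \<longrightarrow> c t = 0)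
           \<and> (\<forall>r. 1 \<le> r \<and> r < s \<longrightarrow> (\<Sum>t\<in>{r..s}. X r t ** c t) = 0)" by auto
  qed
  then obtain C where C: "\<forall>s. C s s = mat 1 \<and> (\<forall>t. s < t \<longrightarrow> C s t = 0)
           \<and> (\<forall>r. 1 \<le> r \<and> r < s \<longrightarrow> (\<Sum>t\<in>{r..s}. X r t ** C s t) = 0)"
    by (rule choice[THEN exE]) blast
  have C1: "\<And>s. C s s = mat 1" using C by blast
  have C3: "\<And>s r. 1 \<le> r \<Longrightarrow> r < s \<Longrightarrow> (\<Sum>t\<in>{r..s}. X r t ** C s t) = 0"
    using C by blast
  define Y where "Y r s = (if r = 0 \<or> s = 0 \<or> s < r then 0 else C s r)" for r s
  have YU: "Y \<in> UT" by (auto simp: UT_def Y_def C1)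
  have "bmul X Y r s = bone r s" for r s
  proof -
    consider "r = 0" | "s = 0" | "s < r" | "1 \<le> r" "r < s" | "1 \<le> r" "r = s" by linarith
    thus ?thesis
    proof cases
      case 1 thus ?thesis using X by (simp add: bmul_def UT_zero bone_def)
    next
      case 2 thus ?thesis by (auto simp: bmul_def Y_def bone_def)
    next
      case 3 thus ?thesis by (simp add: bmul_def bone_def)
    next
      case 4
      have "bmul X Y r s = (\<Sum>t\<in>{r..s}. X r t ** C s t)"
        unfolding bmul_def by (rule sum.cong) (use 4 in \<open>auto simp: Y_def\<close>)
      thus ?thesis using C3[OF 4] 4 by (simp add: bone_def)
    next
      case 5 thus ?thesis using X by (simp add: bmul_def Y_def bone_def C1 UT_one)
    qed
  qed
  thus ?thesis using YU by blast
qed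

lemma inv_unique:
  assumes X: "X \<in> UT" and Y: "Y \<in> UT" and Y': "Y' \<in> UT"
    and e: "bmul X Y = bone" and e': "bmul X Y' = bone"
  shows "Y = Y'"
proof (intro ext)
  fix r s
  have main: "\<forall>r. s - r = d \<longrightarrow> 1 \<le> r \<longrightarrow> r \<le> s \<longrightarrow> Y r s = Y' r s" for d
  proof (induct d rule: less_induct)
    case (less d)
    show ?case
    proof (intro allI impI)
      fix r assume d: "s - r = d" and r1: "1 \<le> r" and rs: "r \<le> s"
      have IH: "Y t s = Y' t s" if "t \<in> {Suc r..s}" for t
        using less[rule_format, of "s - t" t] that d r1 by auto
      have "bmul X Y r s = bmul X Y' r s" using e e' by simp
      hence "X r r ** Y r s + (\<Sum>t\<in>{Suc r..s}. X r t ** Y t s)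
           = X r r ** Y' r s + (\<Sum>t\<in>{Suc r..s}. X r t ** Y' t s)"
        using rs by (simp add: bmul_def sum_split_first)
      moreover have "(\<Sum>t\<in>{Suc r..s}. X r t ** Y t s) = (\<Sum>t\<in>{Suc r..s}. X r t ** Y' t s)"
        by (rule sum.cong) (simp_all add: IH)
      ultimately show "Y r s = Y' r s" using X r1 by (simp add: UT_one)
    qed
  qed
  show "Y r s = Y' r s"
  proof (cases "1 \<le> r \<and> r \<le> s")
    case True thus ?thesis using main by blast
  next
    case False
    hence "r = 0 \<or> s < r" by auto
    thus ?thesis using Y Y' by (auto simp: UT_zero)
  qed
qed



lemma binv_prop: assumes X: "X \<in> UT" shows "binv X \<in> UT \<and> bmul X (binv X) = bone"
proof -
  obtain Y where Y: "Y \<in> UT" "bmul X Y = bone" using inv_exists[OF X] by blast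
  have "\<exists>!Y. Y \<in> UT \<and> bmul X Y = bone"
  proof (rule ex1I[of _ Y])
    show "Y \<in> UT \<and> bmul X Y = bone" using Y by simp
  next
    fix Y' assume "Y' \<in> UT \<and> bmul X Y' = bone"
    thus "Y' = Y" using inv_unique[OF X _ Y(1) _ Y(2)] by simp
  qed
  thus ?thesis unfolding binv_def by (rule theI')
qed

lemma binv_left: assumes X: "X \<in> UT" shows "bmul (binv X) X = bone"
proof -
  have Y: "binv X \<in> UT" and e: "bmul X (binv X) = bone" using binv_prop[OF X] by auto
  obtain Z where Z: "Z \<in> UT" "bmul (binv X) Z = bone" using inv_exists[OF Y] by blast
  have "X = bmul X (bmul (binv X) Z)" using Z X by (simp add: bmul_bone_right)
  also have "\<dots> = bmul (bmul X (binv X)) Z" by (simp only: bmul_assoc)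
  also have "\<dots> = Z" using e Z by (simp add: bmul_bone_left)
  finally show ?thesis using Z by simp
qed


lemma binv_G: assumes X: "X \<in> G" shows "binv X \<in> G"
proof -
  have XU: "X \<in> UT" using X by (simp add: G_def)
  have Y: "binv X \<in> UT" and e: "bmul X (binv X) = bone" using binv_prop[OF XU] by auto
  define Y' where "Y' r s = (if r = 0 \<or> s = 0 then 0 else binv X (r + 3) (s + 3))" for r s
  have Y'U: "Y' \<in> UT" using Y by (auto simp: UT_def Y'_def)
  have "bmul X Y' r s = bone r s" for r s
  proof (cases "r = 0 \<or> s = 0")
    case True thus ?thesis using XU by (auto simp: bmul_def bone_def UT_zero Y'_def)
  next
    case False
    have "bmul X Y' r s = (\<Sum>t\<in>{r..s}. X (r+3) (t+3) ** binv X (t+3) (s+3))"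
      unfolding bmul_def by (rule sum.cong) (use X False in \<open>auto simp: G_def Y'_def\<close>)
    also have "\<dots> = bmul X (binv X) (r + 3) (s + 3)"
      unfolding bmul_def using sum.shift_bounds_cl_nat_ivl[of "\<lambda>t. X (r+3) t ** binv X t (s+3)" r 3 s]
      by simp
    also have "\<dots> = bone r s" using e False by (simp add: bone_def)
    finally show ?thesis .
  qed
  hence "bmul X Y' = bone" by (intro ext)
  hence YY: "Y' = binv X" using inv_unique[OF XU Y'U Y] e by simp
  have "binv X (r + 3) (s + 3) = binv X r s" if "1 \<le> r" "r \<le> s" for r s
  proof -
    have "Y' r s = binv X r s" using YY by simp
    thus ?thesis using that by (simp add: Y'_def)
  qed
  thus ?thesis using Y by (auto simp: G_def)
qed


definition zl :: "bm \<Rightarrow> nat \<Rightarrow> bool" where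
  "zl X l = (\<forall>j\<in>{1..l}. \<forall>r\<ge>1. X r (r + j) = 0)"

lemma zl_at: assumes "zl X l" "1 \<le> s - r" "s - r \<le> l" "1 \<le> r" shows "X r s = 0"
proof -
  have "s - r \<in> {1..l}" using assms by auto
  hence "X r (r + (s - r)) = 0" using assms(1,4) unfolding zl_def by blast
  moreover have "r + (s - r) = s" using assms by arith
  ultimately show ?thesis by simp
qed

lemma sum_restrict: "S \<subseteq> {0..(j::nat)} \<Longrightarrow> (\<And>i. i \<le> j \<Longrightarrow> i \<notin> S \<Longrightarrow> f i = 0) \<Longrightarrow> sum f {0..j} = sum f S"
  by (rule sum.mono_neutral_right) auto

lemma diag_add:
  assumes X: "X \<in> UT" and Y: "Y \<in> UT" and z: "zl X l" and j: "1 \<le> j" "j \<le> l + 1" and r: "1 \<le> r"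
  shows "bmul X Y r (r + j) = X r (r + j) + Y r (r + j)"
proof -
  have "bmul X Y r (r + j) = (\<Sum>i\<in>{0,j}. X r (r + i) ** Y (r + i) (r + j))"
    unfolding prod_diag
  proof (rule sum_restrict)
    fix i assume "i \<le> j" "i \<notin> {0, j}"
    hence "X r (r + i) = 0" using zl_at[OF z, where s="r+i" and r=r] j r by auto
    thus "X r (r + i) ** Y (r + i) (r + j) = 0" by simp
  qed auto
  also have "\<dots> = Y r (r + j) + X r (r + j)" using j X Y r by (simp add: UT_one)
  finally show ?thesis by (simp add: add.commute)
qed

lemma diag_keep:
  assumes Y: "Y \<in> UT" and z: "zl Y L" and j: "1 \<le> j" "j \<le> L" and r: "1 \<le> r"
  shows "bmul X Y r (r + j) = X r (r + j)"
proof -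
  have "bmul X Y r (r + j) = (\<Sum>i\<in>{j}. X r (r + i) ** Y (r + i) (r + j))"
    unfolding prod_diag
  proof (rule sum_restrict)
    fix i assume "i \<le> j" "i \<notin> {j}"
    hence "Y (r + i) (r + j) = 0" using zl_at[OF z, where s="r+j" and r="r+i"] j r by auto
    thus "X r (r + i) ** Y (r + i) (r + j) = 0" by simp
  qed auto
  also have "\<dots> = X r (r + j)" using Y r by (simp add: UT_one)
  finally show ?thesis .
qed

lemma zl_mono: "zl X l \<Longrightarrow> l' \<le> l \<Longrightarrow> zl X l'"
  unfolding zl_def by auto

lemma diag_pow:
  assumes W: "W \<in> UT" and z: "zl W l"
  shows "zl (bpow W q) l \<and> (\<forall>r\<ge>1. bpow W q r (r + (l+1)) = (if odd q then W r (r + (l+1)) else 0))"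
proof (induct q)
  case 0 thus ?case by (auto simp: zl_def bone_def)
next
  case (Suc q)
  have P: "bpow W q \<in> UT" using bpow_UT[OF W] .
  have e: "bmul W (bpow W q) r (r + j) = W r (r + j) + bpow W q r (r + j)"
    if "1 \<le> j" "j \<le> l + 1" "1 \<le> r" for r j using diag_add[OF W P z that] .
  have "zl (bpow W (Suc q)) l"
    unfolding zl_def using e Suc z by (auto simp: zl_def)
  moreover have "\<forall>r\<ge>1. bpow W (Suc q) r (r + (l+1)) = (if odd (Suc q) then W r (r + (l+1)) else 0)"
    using e[of "l+1"] Suc by auto
  ultimately show ?case by blast
qed


lemma diag_sq:
  assumes Z: "Z \<in> UT" and z: "zl Z l"
  shows "zl (bmul Z Z) (2*l+1)"
    and "1 \<le> r \<Longrightarrow> bmul Z Z r (r + (2*l+2)) = Z r (r+(l+1)) ** Z (r+(l+1)) (r+(2*l+2))"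
    and "1 \<le> r \<Longrightarrow> bmul Z Z r (r + (2*l+3)) = Z r (r+(l+1)) ** Z (r+(l+1)) (r+(2*l+3))
                          + Z r (r+(l+2)) ** Z (r+(l+2)) (r+(2*l+3))"
proof -
  have mid: "Z r (r + i) ** Z (r + i) (r + j) = 0"
    if "1 \<le> r" "1 \<le> i" "i < j" "i \<le> l \<or> j - i \<le> l" for r i j
  proof (cases "i \<le> l")
    case True
    hence "Z r (r + i) = 0" using zl_at[OF z, where s="r+i" and r=r] that by auto
    thus ?thesis by simp
  next
    case False
    hence "Z (r + i) (r + j) = 0" using zl_at[OF z, where s="r+j" and r="r+i"] that by auto
    thus ?thesis by simp
  qed
  show "zl (bmul Z Z) (2*l+1)"
    unfolding zl_def
  proof (intro ballI allI impI)
    fix j :: nat and r :: nat assume j: "j \<in> {1..2*l+1}" and r: "1 \<le> r"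
    have "bmul Z Z r (r + j) = (\<Sum>i\<in>{0,j}. Z r (r + i) ** Z (r + i) (r + j))"
      unfolding prod_diag
    proof (rule sum_restrict)
      fix i assume "i \<le> j" "i \<notin> {0, j}"
      thus "Z r (r + i) ** Z (r + i) (r + j) = 0" using j r by (intro mid) auto
    qed (use j in auto)
    also have "\<dots> = 0" using j r Z by (simp add: UT_one)
    finally show "bmul Z Z r (r + j) = 0" .
  qed
  show "bmul Z Z r (r + (2*l+2)) = Z r (r+(l+1)) ** Z (r+(l+1)) (r+(2*l+2))" if r: "1 \<le> r"
  proof -
    have "bmul Z Z r (r + (2*l+2)) = (\<Sum>i\<in>{0,l+1,2*l+2}. Z r (r + i) ** Z (r + i) (r + (2*l+2)))"
      unfolding prod_diag
    proof (rule sum_restrict)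
      fix i assume "i \<le> 2*l+2" "i \<notin> {0,l+1,2*l+2}"
      thus "Z r (r + i) ** Z (r + i) (r + (2*l+2)) = 0" using r by (intro mid) auto
    qed auto
    also have "\<dots> = Z r (r+(l+1)) ** Z (r+(l+1)) (r+(2*l+2))" using r Z
      by (simp add: UT_one add.assoc[symmetric])
    finally show ?thesis .
  qed
  show "bmul Z Z r (r + (2*l+3)) = Z r (r+(l+1)) ** Z (r+(l+1)) (r+(2*l+3))
                          + Z r (r+(l+2)) ** Z (r+(l+2)) (r+(2*l+3))" if r: "1 \<le> r"
  proof -
    have "bmul Z Z r (r + (2*l+3)) = (\<Sum>i\<in>{0,l+1,l+2,2*l+3}. Z r (r + i) ** Z (r + i) (r + (2*l+3)))"
      unfolding prod_diag
    proof (rule sum_restrict)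
      fix i assume "i \<le> 2*l+3" "i \<notin> {0,l+1,l+2,2*l+3}"
      thus "Z r (r + i) ** Z (r + i) (r + (2*l+3)) = 0" using r by (intro mid) auto
    qed auto
    also have "\<dots> = Z r (r+(l+1)) ** Z (r+(l+1)) (r+(2*l+3))
                          + Z r (r+(l+2)) ** Z (r+(l+2)) (r+(2*l+3))" using r Z
      by (simp add: UT_one add.assoc[symmetric])
    finally show ?thesis .
  qed
qed


lemma diag_conj:
  assumes Q: "Q \<in> UT" and U: "U \<in> UT" and X: "X \<in> UT" and e: "bmul Q U = bmul U X"
    and z: "zl X l"
  shows "zl Q l"
    and "1 \<le> r \<Longrightarrow> Q r (r+(l+1)) = X r (r+(l+1))"
    and "1 \<le> r \<Longrightarrow> Q r (r+(l+2)) = X r (r+(l+2)) + U r (r+1) ** X (r+1) (r+(l+2))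
                                  + X r (r+(l+1)) ** U (r+(l+1)) (r+(l+2))"
proof -
  have ez: "bmul Q U r (r + j) = bmul U X r (r + j)" for r j using e by simp
  have Xz: "U r (r + i) ** X (r + i) (r + j) = 0" if "1 \<le> r" "i < j" "j - i \<le> l" for r i j
  proof -
    have "X (r + i) (r + j) = 0" using zl_at[OF z, where s="r+j" and r="r+i"] that by auto
    thus ?thesis by simp
  qed
  have zQ: "\<forall>j. 1 \<le> j \<longrightarrow> j \<le> l \<longrightarrow> Q r (r + j) = 0" if r: "1 \<le> r" for r
  proof (intro allI)
    fix j show "1 \<le> j \<longrightarrow> j \<le> l \<longrightarrow> Q r (r + j) = 0"
    proof (induct j rule: less_induct)
      case (less j)
      show ?case
      proof (intro impI)
        assume j: "1 \<le> j" "j \<le> l"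
        have "bmul Q U r (r + j) = (\<Sum>i\<in>{0,j}. Q r (r + i) ** U (r + i) (r + j))"
          unfolding prod_diag
        proof (rule sum_restrict)
          fix i assume "i \<le> j" "i \<notin> {0, j}"
          hence "Q r (r + i) = 0" using less j by auto
          thus "Q r (r + i) ** U (r + i) (r + j) = 0" by simp
        qed auto
        also have "\<dots> = U r (r + j) + Q r (r + j)" using j r Q U by (simp add: UT_one)
        finally have h1: "bmul Q U r (r + j) = U r (r + j) + Q r (r + j)" .
        have "bmul U X r (r + j) = (\<Sum>i\<in>{j}. U r (r + i) ** X (r + i) (r + j))"
          unfolding prod_diag
        proof (rule sum_restrict)
          fix i assume "i \<le> j" "i \<notin> {j}"
          thus "U r (r + i) ** X (r + i) (r + j) = 0" using j r by (intro Xz) auto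
        qed auto
        also have "\<dots> = U r (r + j)" using X r by (simp add: UT_one)
        finally have h2: "bmul U X r (r + j) = U r (r + j)" .
        show "Q r (r + j) = 0" using h1 h2 ez[of r j] by simp
      qed
    qed
  qed
  show zQl: "zl Q l" unfolding zl_def using zQ by auto
  show q1all: "Q r (r+(l+1)) = X r (r+(l+1))" if r: "1 \<le> r"
  proof -
    have "bmul Q U r (r + (l+1)) = (\<Sum>i\<in>{0,l+1}. Q r (r + i) ** U (r + i) (r + (l+1)))"
      unfolding prod_diag
    proof (rule sum_restrict)
      fix i assume "i \<le> l+1" "i \<notin> {0, l+1}"
      hence "Q r (r + i) = 0" using zQ[OF r] by auto
      thus "Q r (r + i) ** U (r + i) (r + (l+1)) = 0" by simp
    qed auto
    also have "\<dots> = U r (r + (l+1)) + Q r (r + (l+1))" using r Q U by (simp add: UT_one)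
    finally have h1: "bmul Q U r (r + (l+1)) = U r (r + (l+1)) + Q r (r + (l+1))" .
    have "bmul U X r (r + (l+1)) = (\<Sum>i\<in>{0,l+1}. U r (r + i) ** X (r + i) (r + (l+1)))"
      unfolding prod_diag
    proof (rule sum_restrict)
      fix i assume "i \<le> l+1" "i \<notin> {0,l+1}"
      thus "U r (r + i) ** X (r + i) (r + (l+1)) = 0" using r by (intro Xz) auto
    qed auto
    also have "\<dots> = X r (r + (l+1)) + U r (r + (l+1))" using X U r by (simp add: UT_one)
    finally have h2: "bmul U X r (r + (l+1)) = X r (r + (l+1)) + U r (r + (l+1))" .
    show ?thesis using h1 h2 ez[of r "l+1"] by (simp add: add.commute)
  qed
  show "Q r (r+(l+2)) = X r (r+(l+2)) + U r (r+1) ** X (r+1) (r+(l+2))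
                                  + X r (r+(l+1)) ** U (r+(l+1)) (r+(l+2))" if r: "1 \<le> r"
  proof -
    have q1: "Q r (r+(l+1)) = X r (r+(l+1))" by (rule q1all[OF r])
    have "bmul Q U r (r + (l+2)) = (\<Sum>i\<in>{0,l+1,l+2}. Q r (r + i) ** U (r + i) (r + (l+2)))"
      unfolding prod_diag
    proof (rule sum_restrict)
      fix i assume "i \<le> l+2" "i \<notin> {0, l+1, l+2}"
      hence "Q r (r + i) = 0" using zQ[OF r] by auto
      thus "Q r (r + i) ** U (r + i) (r + (l+2)) = 0" by simp
    qed auto
    also have "\<dots> = U r (r + (l+2)) + (Q r (r + (l+1)) ** U (r+(l+1)) (r + (l+2)) + Q r (r + (l+2)))"
      using r Q U by (simp add: UT_one)
    finally have h1: "bmul Q U r (r + (l+2)) = U r (r + (l+2)) + (Q r (r + (l+1)) ** U (r+(l+1)) (r + (l+2)) + Q r (r + (l+2)))" .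
    have "bmul U X r (r + (l+2)) = (\<Sum>i\<in>{0,1,l+2}. U r (r + i) ** X (r + i) (r + (l+2)))"
      unfolding prod_diag
    proof (rule sum_restrict)
      fix i assume "i \<le> l+2" "i \<notin> {0,1,l+2}"
      thus "U r (r + i) ** X (r + i) (r + (l+2)) = 0" using r by (intro Xz) auto
    qed auto
    also have "\<dots> = X r (r + (l+2)) + (U r (r+1) ** X (r+1) (r + (l+2)) + U r (r + (l+2)))"
      using X U r by (simp add: UT_one)
    finally have h2: "bmul U X r (r + (l+2)) = X r (r + (l+2)) + (U r (r+1) ** X (r+1) (r + (l+2)) + U r (r + (l+2)))" .
    have h: "U r (r + (l+2)) + (Q r (r + (l+1)) ** U (r+(l+1)) (r + (l+2)) + Q r (r + (l+2)))
       = X r (r + (l+2)) + (U r (r+1) ** X (r+1) (r + (l+2)) + U r (r + (l+2)))"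
      using h1 h2 ez[of r "l+2"] by simp
    define a where "a = U r (r + (l+2))"
    define c where "c = Q r (r + (l+1)) ** U (r+(l+1)) (r + (l+2))"
    define q where "q = Q r (r + (l+2))"
    define x where "x = X r (r + (l+2))"
    define d where "d = U r (r+1) ** X (r+1) (r + (l+2))"
    have h': "a + (c + q) = x + (d + a)" using h by (simp add: a_def c_def q_def x_def d_def)
    have "q = (a + (c + q)) + (a + c)" by (simp add: algebra_simps)
    also have "\<dots> = x + d + c" unfolding h' by (simp add: algebra_simps)
    finally show ?thesis using q1 by (simp add: q_def x_def d_def c_def)
  qed
qed



definition nxt :: "nat \<Rightarrow> nat" where "nxt i = (if i = 3 then 1 else i + 1)"

lemma pidx_range: "pidx r \<in> {1,2,3}"
  unfolding pidx_def by auto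

lemma pidx_Suc: "1 \<le> r \<Longrightarrow> pidx (r + 1) = nxt (pidx r)"
  unfolding pidx_def nxt_def by (cases r) (auto, presburger+)

lemma pidx_add3: assumes "1 \<le> r" shows "pidx (r + 3 * q + t) = pidx (r + t)"
proof -
  have "r + 3 * q + t - 1 = (r + t - 1) + 3 * q" using assms by arith
  thus ?thesis unfolding pidx_def by simp
qed

lemma pidx_Suc': "1 \<le> r \<Longrightarrow> pidx (Suc r) = nxt (pidx r)"
  using pidx_Suc by simp

lemma pidx_Suc2: "1 \<le> r \<Longrightarrow> pidx (r + 2) = nxt (nxt (pidx r))"
  using pidx_Suc[of r] pidx_Suc[of "r+1"] by (simp add: numeral_2_eq_2)

lemma pow2_mod3: "2 ^ k mod 3 = (if odd k then 2 else (1::nat))"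
  by (induct k) (auto simp: mod_simps, presburger+)

lemma pidx_pow2: assumes r: "1 \<le> r"
  shows "pidx (r + 2 ^ k) = (if odd k then nxt (nxt (pidx r)) else nxt (pidx r))"
proof -
  have "2 ^ k = 3 * (2 ^ k div 3) + 2 ^ k mod (3::nat)" by simp
  hence "pidx (r + 2 ^ k) = pidx (r + 2 ^ k mod 3)"
    using pidx_add3[OF r, of "2 ^ k div 3" "2 ^ k mod 3"] by (metis add.assoc)
  also have "\<dots> = (if odd k then pidx (r + 2) else pidx (r + 1))"
    by (simp add: pow2_mod3)
  also have "\<dots> = (if odd k then nxt (nxt (pidx r)) else nxt (pidx r))"
    using r pidx_Suc[OF r] pidx_Suc2[OF r] by simp
  finally show ?thesis .
qed


lemma dec_0: "dec 0 = (vector [vector [0, 0, 0], vector [0, 0, 0], vector [0, 0, 0]] :: m3)"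
  by (simp add: dec_def bitc_def)

lemma dec_23: "dec 23 = (vector [vector [0, 0, 0], vector [0, 1, 0], vector [1, 1, 1]] :: m3)"
  by (simp add: dec_def bitc_def)

lemma dec_224: "dec 224 = (vector [vector [0, 1, 1], vector [1, 0, 0], vector [0, 0, 0]] :: m3)"
  by (simp add: dec_def bitc_def)

lemma dec_138: "dec 138 = (vector [vector [0, 1, 0], vector [0, 0, 1], vector [0, 1, 0]] :: m3)"
  by (simp add: dec_def bitc_def)

lemma dec_39: "dec 39 = (vector [vector [0, 0, 0], vector [1, 0, 0], vector [1, 1, 1]] :: m3)"
  by (simp add: dec_def bitc_def)

lemma dec_208: "dec 208 = (vector [vector [0, 1, 1], vector [0, 1, 0], vector [0, 0, 0]] :: m3)"
  by (simp add: dec_def bitc_def)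

lemma dec_186: "dec 186 = (vector [vector [0, 1, 0], vector [1, 1, 1], vector [0, 1, 0]] :: m3)"
  by (simp add: dec_def bitc_def)

lemma dec_59: "dec 59 = (vector [vector [0, 0, 0], vector [1, 1, 1], vector [0, 1, 1]] :: m3)"
  by (simp add: dec_def bitc_def)

lemma dec_136: "dec 136 = (vector [vector [0, 1, 0], vector [0, 0, 1], vector [0, 0, 0]] :: m3)"
  by (simp add: dec_def bitc_def)

lemma dec_495: "dec 495 = (vector [vector [1, 1, 1], vector [1, 0, 1], vector [1, 1, 1]] :: m3)"
  by (simp add: dec_def bitc_def)

lemma dec_28: "dec 28 = (vector [vector [0, 0, 0], vector [0, 1, 1], vector [1, 0, 0]] :: m3)"
  by (simp add: dec_def bitc_def)

lemma dec_88: "dec 88 = (vector [vector [0, 0, 1], vector [0, 1, 1], vector [0, 0, 0]] :: m3)"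
  by (simp add: dec_def bitc_def)

lemma dec_341: "dec 341 = (vector [vector [1, 0, 1], vector [0, 1, 0], vector [1, 0, 1]] :: m3)"
  by (simp add: dec_def bitc_def)

lemma dec_46: "dec 46 = (vector [vector [0, 0, 0], vector [1, 0, 1], vector [1, 1, 0]] :: m3)"
  by (simp add: dec_def bitc_def)

lemma dec_68: "dec 68 = (vector [vector [0, 0, 1], vector [0, 0, 0], vector [1, 0, 0]] :: m3)"
  by (simp add: dec_def bitc_def)

lemma dec_217: "dec 217 = (vector [vector [0, 1, 1], vector [0, 1, 1], vector [0, 0, 1]] :: m3)"
  by (simp add: dec_def bitc_def)

lemma dec_33: "dec 33 = (vector [vector [0, 0, 0], vector [1, 0, 0], vector [0, 0, 1]] :: m3)"
  by (simp add: dec_def bitc_def)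

lemma dec_146: "dec 146 = (vector [vector [0, 1, 0], vector [0, 1, 0], vector [0, 1, 0]] :: m3)"
  by (simp add: dec_def bitc_def)

lemma dec_501: "dec 501 = (vector [vector [1, 1, 1], vector [1, 1, 0], vector [1, 0, 1]] :: m3)"
  by (simp add: dec_def bitc_def)

lemma dec_6: "dec 6 = (vector [vector [0, 0, 0], vector [0, 0, 0], vector [1, 1, 0]] :: m3)"
  by (simp add: dec_def bitc_def)

lemma dec_66: "dec 66 = (vector [vector [0, 0, 1], vector [0, 0, 0], vector [0, 1, 0]] :: m3)"
  by (simp add: dec_def bitc_def)

lemma dec_335: "dec 335 = (vector [vector [1, 0, 1], vector [0, 0, 1], vector [1, 1, 1]] :: m3)"
  by (simp add: dec_def bitc_def)

lemma dec_106: "dec 106 = (vector [vector [0, 0, 1], vector [1, 0, 1], vector [0, 1, 0]] :: m3)"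
  by (simp add: dec_def bitc_def)

lemma dec_247: "dec 247 = (vector [vector [0, 1, 1], vector [1, 1, 0], vector [1, 1, 1]] :: m3)"
  by (simp add: dec_def bitc_def)

lemma dec_26: "dec 26 = (vector [vector [0, 0, 0], vector [0, 1, 1], vector [0, 1, 0]] :: m3)"
  by (simp add: dec_def bitc_def)

lemmas decs = dec_0 dec_23 dec_224 dec_138 dec_39 dec_208 dec_186 dec_59 dec_136 dec_495 dec_28 dec_88 dec_341 dec_46 dec_68 dec_217 dec_33 dec_146 dec_501 dec_6 dec_66 dec_335 dec_106 dec_247 dec_26

lemmas mcc = dblock_def nxt_def decs vec_eq_iff forall_3 matrix_matrix_mult_def sum_3

lemma dec0: "dblock (0,0,0) p = 0"
  by (simp add: dblock_def dec_0 vec_eq_iff forall_3)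

lemma c1: "p \<in> {1,2,3} \<Longrightarrow> dblock (23,224,138) p ** dblock (23,224,138) (nxt p) = dblock (39,208,186) p"
  by (auto simp: mcc)
lemma c2: "p \<in> {1,2,3} \<Longrightarrow> dblock (23,224,138) p ** dblock (59,136,495) (nxt p)
   + dblock (59,136,495) p ** dblock (23,224,138) (nxt (nxt p)) = dblock (0,0,0) p"
  by (auto simp: mcc)
lemma c3: "p \<in> {1,2,3} \<Longrightarrow> dblock (39,208,186) p ** dblock (39,208,186) (nxt (nxt p)) = dblock (23,224,138) p"
  by (auto simp: mcc)
lemma c5: "p \<in> {1,2,3} \<Longrightarrow> dblock (59,136,495) p + dblock (39,208,186) p = dblock (28,88,341) p"
  by (auto simp: mcc)
lemma c6: "p \<in> {1,2,3} \<Longrightarrow> dblock (59,136,495) p + dblock (46,68,217) p ** dblock (23,224,138) (nxt p)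
   + dblock (23,224,138) p ** dblock (46,68,217) (nxt p) = dblock (33,146,501) p"
  by (auto simp: mcc)
lemma c7: "p \<in> {1,2,3} \<Longrightarrow> dblock (28,88,341) p + dblock (46,68,217) p ** dblock (23,224,138) (nxt p)
   + dblock (23,224,138) p ** dblock (46,68,217) (nxt p) = dblock (6,66,335) p"
  by (auto simp: mcc)
lemma c8: "p \<in> {1,2,3} \<Longrightarrow> dblock (0,0,0) p + dblock (46,68,217) p ** dblock (39,208,186) (nxt p)
   + dblock (39,208,186) p ** dblock (46,68,217) (nxt (nxt p)) = dblock (0,106,247) p"
  by (auto simp: mcc)
lemma c9: "p \<in> {1,2,3} \<Longrightarrow> dblock (0,0,0) p + dblock (46,68,217) p ** dblock (23,224,138) (nxt p)
   + dblock (23,224,138) p ** dblock (46,68,217) (nxt p) = dblock (26,26,26) p"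
  by (auto simp: mcc)


lemma Mfin_at: "1 \<le> r \<Longrightarrow> r < s \<Longrightarrow> s - r \<le> length cs \<Longrightarrow> Mfin cs r s = dblock (cs ! (s - r - 1)) (pidx r)"
  by (simp add: Mfin_def)

lemma Mfin_G: "Mfin cs \<in> G"
proof -
  have "Mfin cs \<in> UT" by (auto simp: UT_def Mfin_def)
  moreover have "Mfin cs (r + 3) (s + 3) = Mfin cs r s" if "1 \<le> r" "r \<le> s" for r s
  proof -
    have "pidx (r + 3) = pidx r" using pidx_add3[OF that(1), of 1 0] by simp
    thus ?thesis using that by (simp add: Mfin_def)
  qed
  ultimately show ?thesis by (simp add: G_def)
qed

lemma x1_G: "x1 \<in> G" by (simp add: x1_def Mfin_G)
lemma x2_G: "x2 \<in> G" by (simp add: x2_def Mfin_G)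
lemma x1_d1: "1 \<le> r \<Longrightarrow> x1 r (r + 1) = dblock (23,224,138) (pidx r)"
  by (simp add: x1_def Mfin_at)
lemma x1_d2: "1 \<le> r \<Longrightarrow> x1 r (r + 2) = dblock (59,136,495) (pidx r)"
  by (simp add: x1_def Mfin_at)
lemma x2_d1: "1 \<le> r \<Longrightarrow> x2 r (r + 1) = dblock (46,68,217) (pidx r)"
  by (simp add: x2_def Mfin_at)

lemma isM2: "isM X l [c1, c2] \<longleftrightarrow> X \<in> G \<and> zl X l \<and> has_diag X (l+1) c1 \<and> has_diag X (l+2) c2"
proof -
  have "(\<forall>i<length [c1, c2]. has_diag X (l + 1 + i) ([c1, c2] ! i)) \<longleftrightarrow> has_diag X (l+1) c1 \<and> has_diag X (l+2) c2"
    by (auto simp: less_Suc_eq numeral_2_eq_2)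
  thus ?thesis unfolding isM_def zl_def by blast
qed

lemma odd_mult:
  assumes P: "P \<in> UT" and z: "zl P l" and l1: "1 \<le> l" and m: "odd m"
  shows "zl (bpow P m) l \<and> (\<forall>r\<ge>1. bpow P m r (r+(l+1)) = P r (r+(l+1)))
         \<and> (\<forall>r\<ge>1. bpow P m r (r+(l+2)) = P r (r+(l+2)))"
proof -
  obtain q where mq: "m = Suc (2 * q)" using m oddE by fastforce
  define W where "W = bpow (bmul P P) q"
  have "bpow P m = bmul P (bpow P (2 * q))" using mq by simp
  also have "\<dots> = bmul P W" unfolding W_def using bpow_mult[OF P, of 2 q] bpow_2[OF P] by simp
  finally have e: "bpow P m = bmul P W" .
  have PP: "bmul P P \<in> UT" using bmul_UT[OF P P] .
  have zW: "zl W (2*l+1)" unfolding W_def using diag_pow[OF PP diag_sq(1)[OF P z]] by blast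
  have WU: "W \<in> UT" unfolding W_def using bpow_UT[OF PP] .
  have k: "bmul P W r (r + j) = P r (r + j)" if "1 \<le> j" "j \<le> 2*l+1" "1 \<le> r" for r j
    using diag_keep[OF WU zW that] .
  have "zl (bmul P W) l" using k z l1 by (auto simp: zl_def)
  moreover have "\<forall>r\<ge>1. bmul P W r (r+(l+1)) = P r (r+(l+1))"
  proof (intro allI impI)
    fix r :: nat assume "1 \<le> r" thus "bmul P W r (r+(l+1)) = P r (r+(l+1))" using k[of "l+1" r] l1 by simp
  qed
  moreover have "\<forall>r\<ge>1. bmul P W r (r+(l+2)) = P r (r+(l+2))"
  proof (intro allI impI)
    fix r :: nat assume "1 \<le> r" thus "bmul P W r (r+(l+2)) = P r (r+(l+2))" using k[of "l+2" r] l1 by simp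
  qed
  ultimately show ?thesis unfolding e by blast
qed

lemma cb_step: "1 \<le> r \<Longrightarrow>
  dblock (if odd k then (39,208,186) else (23,224,138)) (pidx r) **
  dblock (if odd k then (39,208,186) else (23,224,138)) (pidx (r + 2 ^ k))
  = dblock (if odd (Suc k) then (39,208,186) else (23,224,138)) (pidx r)"
  using c1[OF pidx_range] c3[OF pidx_range] by (simp add: pidx_pow2)




lemma x1_pow2:
  assumes "1 \<le> k"
  shows "zl (bpow x1 (2^k)) (2^k - 1)
    \<and> (\<forall>r\<ge>1. bpow x1 (2^k) r (r + 2^k) = dblock (if odd k then (39,208,186) else (23,224,138)) (pidx r))
    \<and> (\<forall>r\<ge>1. bpow x1 (2^k) r (r + (2^k + 1)) = 0)"
  using assms
proof (induct k rule: nat_induct_at_least)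
  case base
  have XU: "x1 \<in> UT" using x1_G G_UT by blast
  have z0: "zl x1 0" by (simp add: zl_def)
  have e: "bpow x1 (2^1) = bmul x1 x1" using bpow_2[OF XU] by simp
  have s2: "bmul x1 x1 r (r + 2) = dblock (39,208,186) (pidx r)" if r: "1 \<le> r" for r
  proof -
    have "bmul x1 x1 r (r + 2) = x1 r (r + 1) ** x1 (r + 1) ((r + 1) + 1)"
      using diag_sq(2)[OF XU z0 r] by (simp add: numeral_2_eq_2)
    also have "\<dots> = dblock (39,208,186) (pidx r)"
      using x1_d1[OF r] x1_d1[of "r+1"] r c1[OF pidx_range] by (simp add: pidx_Suc')
    finally show ?thesis .
  qed
  have s3: "bmul x1 x1 r (r + 3) = 0" if r: "1 \<le> r" for r
  proof -
    have "bmul x1 x1 r (r + 3) = x1 r (r + 1) ** x1 (r + 1) ((r + 1) + 2) + x1 r (r + 2) ** x1 (r + 2) ((r + 2) + 1)"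
      using diag_sq(3)[OF XU z0 r] by (simp add: numeral_2_eq_2 numeral_3_eq_3)
    also have "\<dots> = 0"
      using x1_d1[OF r] x1_d1[of "r+2"] x1_d2[OF r] x1_d2[of "r+1"] r c2[OF pidx_range, of r]
        pidx_Suc[OF r] pidx_Suc2[OF r] by (simp add: dec0)
    finally show ?thesis .
  qed
  show ?case using diag_sq(1)[OF XU z0] s2 s3 e by simp
next
  case (Suc k)
  define L where "L = (2::nat) ^ k"
  define l where "l = L - 1"
  have "(2::nat) ^ 1 \<le> 2 ^ k" by (rule power_increasing) (use Suc.hyps in auto)
  hence L2: "2 \<le> L" by (simp add: L_def)
  have lL: "l + 1 = L" using L2 by (simp add: l_def)
  have L2k: "2 ^ Suc k = L + L" by (simp add: L_def)
  define P where "P = bpow x1 L"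
  have XU: "x1 \<in> UT" using x1_G G_UT by blast
  have PU: "P \<in> UT" unfolding P_def using bpow_UT[OF XU] .
  have zP: "zl P l" and dP: "\<And>r. 1 \<le> r \<Longrightarrow> P r (r + L) = dblock (if odd k then (39,208,186) else (23,224,138)) (pidx r)"
    and dP2: "\<And>r. 1 \<le> r \<Longrightarrow> P r (r + (L + 1)) = 0"
    using Suc.hyps(2) by (auto simp: P_def L_def l_def)
  have e: "bpow x1 (2 ^ Suc k) = bmul P P"
    using bpow_mult[OF XU, of L 2] bpow_2[OF PU] by (simp add: P_def L_def mult.commute)
  have eq1: "2 * l + 1 = 2 ^ Suc k - 1" using lL L2k by arith
  have z: "zl (bmul P P) (2 ^ Suc k - 1)"
    using diag_sq(1)[OF PU zP] by (simp only: eq1)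
  have s2: "bmul P P r (r + 2 ^ Suc k) = dblock (if odd (Suc k) then (39,208,186) else (23,224,138)) (pidx r)"
    if r: "1 \<le> r" for r
  proof -
    have a: "bmul P P r (r + (2*l+2)) = P r (r+(l+1)) ** P (r+(l+1)) (r+(2*l+2))"
      by (rule diag_sq(2)[OF PU zP r])
    have q1: "r + (2*l+2) = r + 2 ^ Suc k" using lL L2k by arith
    have q2: "r + (l+1) = r + L" using lL by arith
    have q3: "r + (2*l+2) = (r + L) + L" using lL by arith
    have b: "P (r+(l+1)) (r+(2*l+2)) = P (r + L) ((r + L) + L)" by (simp only: q2 q3)
    have c: "P r (r+(l+1)) = P r (r + L)" by (simp only: q2)
    have "bmul P P r (r + 2 ^ Suc k) = P r (r + L) ** P (r + L) ((r + L) + L)"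
      using a b c by (simp only: q1)
    also have "\<dots> = dblock (if odd (Suc k) then (39,208,186) else (23,224,138)) (pidx r)"
      using dP[OF r] dP[of "r + L"] r cb_step[OF r, of k] by (simp add: L_def)
    finally show ?thesis .
  qed
  have s3: "bmul P P r (r + (2 ^ Suc k + 1)) = 0" if r: "1 \<le> r" for r
  proof -
    have a: "bmul P P r (r + (2*l+3)) = P r (r+(l+1)) ** P (r+(l+1)) (r+(2*l+3))
                          + P r (r+(l+2)) ** P (r+(l+2)) (r+(2*l+3))"
      by (rule diag_sq(3)[OF PU zP r])
    have q1: "r + (2*l+3) = r + (2 ^ Suc k + 1)" using lL L2k by arith
    have q2: "(r + (l+1)) + (L + 1) = r + (2*l+3)" using lL by arith
    have q3: "r + (l+2) = r + (L + 1)" using lL by arith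
    have b: "P (r+(l+1)) (r+(2*l+3)) = 0"
    proof -
      have "P (r+(l+1)) ((r + (l+1)) + (L + 1)) = 0" using dP2[of "r+(l+1)"] r by simp
      thus ?thesis by (simp only: q2)
    qed
    have c: "P r (r+(l+2)) = 0" using dP2[OF r] by (simp only: q3)
    show ?thesis using a b c by (simp only: q1) simp
  qed
  show ?case using z s2 s3 e by simp
qed


lemma x1sq: "zl (bmul x1 x1) 1" "1 \<le> r \<Longrightarrow> bmul x1 x1 r (r + 2) = dblock (39,208,186) (pidx r)"
proof -
  have XU: "x1 \<in> UT" using x1_G G_UT by blast
  have z0: "zl x1 0" by (simp add: zl_def)
  show "zl (bmul x1 x1) 1" using diag_sq(1)[OF XU z0] by simp
  have e: "bpow x1 (2^1) = bmul x1 x1" using bpow_2[OF XU] by simp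
  assume r: "1 \<le> r"
  show "bmul x1 x1 r (r + 2) = dblock (39,208,186) (pidx r)"
    using x1_pow2[of 1] e r by simp
qed

lemma x1_odd:
  assumes m: "odd m"
  shows "zl (bpow x1 m) 0 \<and> (\<forall>r\<ge>1. bpow x1 m r (r + 1) = dblock (23,224,138) (pidx r))
    \<and> ((\<forall>r\<ge>1. bpow x1 m r (r + 2) = dblock (59,136,495) (pidx r))
      \<or> (\<forall>r\<ge>1. bpow x1 m r (r + 2) = dblock (28,88,341) (pidx r)))"
proof -
  have XU: "x1 \<in> UT" using x1_G G_UT by blast
  obtain q where mq: "m = Suc (2 * q)" using m oddE by fastforce
  define W where "W = bpow (bmul x1 x1) q"
  have "bpow x1 m = bmul x1 (bpow x1 (2 * q))" using mq by simp
  also have "\<dots> = bmul x1 W" unfolding W_def using bpow_mult[OF XU, of 2 q] bpow_2[OF XU] by simp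
  finally have e: "bpow x1 m = bmul x1 W" .
  have PP: "bmul x1 x1 \<in> UT" using bmul_UT[OF XU XU] .
  have WU: "W \<in> UT" unfolding W_def using bpow_UT[OF PP] .
  have dW: "zl W 1 \<and> (\<forall>r\<ge>1. W r (r + (1+1)) = (if odd q then bmul x1 x1 r (r + (1+1)) else 0))"
    unfolding W_def by (rule diag_pow[OF PP x1sq(1)])
  hence zW: "zl W 1" and W2: "\<And>r. 1 \<le> r \<Longrightarrow> W r (r + 2) = (if odd q then dblock (39,208,186) (pidx r) else 0)"
    using x1sq(2) by auto
  have d1: "bmul x1 W r (r + 1) = dblock (23,224,138) (pidx r)" if r: "1 \<le> r" for r
    using diag_keep[OF WU zW _ _ r, of 1 x1] x1_d1[OF r] by simp
  have d2: "bmul x1 W r (r + 2) = x1 r (r + 2) + W r (r + 2)" if r: "1 \<le> r" for r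
  proof -
    have "bmul x1 W r (r + 2) = (\<Sum>i\<in>{0,2}. x1 r (r + i) ** W (r + i) (r + 2))"
      unfolding prod_diag
    proof (rule sum_restrict)
      fix i assume "i \<le> 2" "i \<notin> {0,2::nat}"
      hence i: "i = 1" by auto
      have "W (r + 1) (r + 2) = 0" using zl_at[OF zW, where r="r+1" and s="r+2"] r by simp
      thus "x1 r (r + i) ** W (r + i) (r + 2) = 0" using i by simp
    qed auto
    also have "\<dots> = W r (r + 2) + x1 r (r + 2)" using r XU WU by (simp add: UT_one)
    finally show ?thesis by (simp add: add.commute)
  qed
  have z: "zl (bmul x1 W) 0" by (simp add: zl_def)
  show ?thesis
  proof (cases "odd q")
    case True
    have "\<forall>r\<ge>1. bmul x1 W r (r + 2) = dblock (28,88,341) (pidx r)"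
      using d2 W2 x1_d2 True c5[OF pidx_range] by simp
    thus ?thesis using e d1 z by simp
  next
    case False
    have "\<forall>r\<ge>1. bmul x1 W r (r + 2) = dblock (59,136,495) (pidx r)"
      using d2 W2 x1_d2 False by simp
    thus ?thesis using e d1 z by simp
  qed
qed

lemma decomp: "1 \<le> (n::nat) \<Longrightarrow> \<exists>k m. n = 2 ^ k * m \<and> odd m"
proof (induct n rule: less_induct)
  case (less n)
  show ?case
  proof (cases "odd n")
    case True thus ?thesis by (intro exI[of _ 0] exI[of _ n]) simp
  next
    case False
    then obtain n' where n': "n = 2 * n'" by blast
    hence "1 \<le> n'" "n' < n" using less.prems by auto
    then obtain k m where "n' = 2 ^ k * m" "odd m" using less.hyps by blast
    thus ?thesis using n' by (intro exI[of _ "Suc k"] exI[of _ m]) simp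
  qed
qed


lemma pw: "(2::nat)^k - 1 + 1 = 2^k" "(2::nat)^k - 1 + 2 = 2^k + 1"
proof -
  have "1 \<le> (2::nat)^k" by simp
  thus "(2::nat)^k - 1 + 1 = 2^k" "(2::nat)^k - 1 + 2 = 2^k + 1" by arith+
qed

lemma x1_class:
  assumes n: "1 \<le> n"
  shows "(zl (bpow x1 n) 0 \<and> (\<forall>r\<ge>1. bpow x1 n r (r+1) = dblock (23,224,138) (pidx r))
            \<and> (\<forall>r\<ge>1. bpow x1 n r (r+2) = dblock (59,136,495) (pidx r)))
       \<or> (zl (bpow x1 n) 0 \<and> (\<forall>r\<ge>1. bpow x1 n r (r+1) = dblock (23,224,138) (pidx r))
            \<and> (\<forall>r\<ge>1. bpow x1 n r (r+2) = dblock (28,88,341) (pidx r)))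
       \<or> (\<exists>k. odd k \<and> 1 \<le> k \<and> zl (bpow x1 n) (2^k-1)
            \<and> (\<forall>r\<ge>1. bpow x1 n r (r+2^k) = dblock (39,208,186) (pidx r))
            \<and> (\<forall>r\<ge>1. bpow x1 n r (r+(2^k+1)) = dblock (0,0,0) (pidx r)))
       \<or> (\<exists>k. even k \<and> 2 \<le> k \<and> zl (bpow x1 n) (2^k-1)
            \<and> (\<forall>r\<ge>1. bpow x1 n r (r+2^k) = dblock (23,224,138) (pidx r))
            \<and> (\<forall>r\<ge>1. bpow x1 n r (r+(2^k+1)) = dblock (0,0,0) (pidx r)))"
proof -
  obtain k m where nm: "n = 2 ^ k * m" and m: "odd m" using decomp[OF n] by blast
  show ?thesis
  proof (cases "k = 0")
    case True
    thus ?thesis using x1_odd[OF m] nm by auto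
  next
    case False
    hence k1: "1 \<le> k" by simp
    have XU: "x1 \<in> UT" using x1_G G_UT by blast
    define P where "P = bpow x1 (2^k)"
    define l where "l = (2::nat)^k - 1"
    have PU: "P \<in> UT" unfolding P_def using bpow_UT[OF XU] .
    have "(2::nat)^1 \<le> 2^k" by (rule power_increasing) (use k1 in auto)
    hence l1: "1 \<le> l" by (simp add: l_def)
    have lp1: "l + 1 = 2^k" and lp2: "l + 2 = 2^k + 1" using pw[of k] by (simp_all add: l_def)
    have pp: "zl P l" "\<forall>r\<ge>1. P r (r + 2^k) = dblock (if odd k then (39,208,186) else (23,224,138)) (pidx r)"
      "\<forall>r\<ge>1. P r (r + (2^k + 1)) = 0"
      using x1_pow2[OF k1] by (simp_all add: P_def l_def)
    have e: "bpow x1 n = bpow P m" using bpow_mult[OF XU] nm by (simp add: P_def)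
    have om: "zl (bpow P m) l \<and> (\<forall>r\<ge>1. bpow P m r (r+(l+1)) = P r (r+(l+1)))
         \<and> (\<forall>r\<ge>1. bpow P m r (r+(l+2)) = P r (r+(l+2)))"
      by (rule odd_mult[OF PU pp(1) l1 m])
    hence om': "zl (bpow x1 n) (2^k - 1)"
      "\<forall>r\<ge>1. bpow x1 n r (r+2^k) = dblock (if odd k then (39,208,186) else (23,224,138)) (pidx r)"
      "\<forall>r\<ge>1. bpow x1 n r (r+(2^k+1)) = dblock (0,0,0) (pidx r)"
      using pp e unfolding lp1 lp2 by (simp_all add: l_def dec0)
    show ?thesis
    proof (cases "odd k")
      case True
      thus ?thesis using om' k1 by auto
    next
      case False
      hence "k \<noteq> 1" by auto
      hence "2 \<le> k" using k1 by arith
      thus ?thesis using om' False by auto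
    qed
  qed
qed

lemma y1_gen:
  assumes Q: "Q \<in> UT" and X: "X \<in> UT" and e: "bmul Q x2 = bmul x2 X" and z: "zl X l"
    and d1: "\<forall>r\<ge>1. X r (r+(l+1)) = dblock c1 (pidx r)"
    and d2: "\<forall>r\<ge>1. X r (r+(l+2)) = dblock c2 (pidx r)"
    and f: "\<forall>r\<ge>1. pidx (r+(l+1)) = f (pidx r)"
  shows "zl Q l \<and> (\<forall>r\<ge>1. Q r (r+(l+1)) = dblock c1 (pidx r))
     \<and> (\<forall>r\<ge>1. Q r (r+(l+2)) = dblock c2 (pidx r) + dblock (46,68,217) (pidx r) ** dblock c1 (nxt (pidx r))
           + dblock c1 (pidx r) ** dblock (46,68,217) (f (pidx r)))"
proof -
  have U: "x2 \<in> UT" using x2_G G_UT by blast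
  note dc = diag_conj[OF Q U X e z]
  have A: "Q r (r+(l+2)) = dblock c2 (pidx r) + dblock (46,68,217) (pidx r) ** dblock c1 (nxt (pidx r))
           + dblock c1 (pidx r) ** dblock (46,68,217) (f (pidx r))" if r: "1 \<le> r" for r
  proof -
    have q1: "(r+1)+(l+1) = r+(l+2)" by simp
    have q2: "(r+(l+1))+1 = r+(l+2)" by simp
    have r1: "1 \<le> r + 1" "1 \<le> r+(l+1)" using r by auto
    have a: "X (r+1) (r+(l+2)) = dblock c1 (nxt (pidx r))"
    proof -
      have "X (r+1) ((r+1)+(l+1)) = dblock c1 (pidx (r+1))" using d1 r1 by blast
      thus ?thesis using pidx_Suc[OF r] by (simp only: q1)
    qed
    have b: "x2 (r+(l+1)) (r+(l+2)) = dblock (46,68,217) (f (pidx r))"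
    proof -
      have "x2 (r+(l+1)) ((r+(l+1))+1) = dblock (46,68,217) (pidx (r+(l+1)))" using x2_d1 r1 by blast
      thus ?thesis using f r by (simp only: q2)
    qed
    show ?thesis using dc(3)[OF r] a b d1 d2 x2_d1[OF r] r by simp
  qed
  show ?thesis using dc(1) dc(2) d1 A by simp
qed

lemma y1_pow: "bpow y1 n = bmul (bmul x2 (bpow x1 n)) (binv x2)"
proof (induct n)
  case 0
  have "x2 \<in> UT" using x2_G G_UT by blast
  thus ?case using binv_prop[of x2] by (simp add: bmul_bone_right)
next
  case (Suc n)
  have U: "x2 \<in> UT" using x2_G G_UT by blast
  have XU: "x1 \<in> UT" using x1_G G_UT by blast
  have Ui: "binv x2 \<in> UT" and l: "bmul (binv x2) x2 = bone" using binv_prop[OF U] binv_left[OF U] by auto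
  have c: "bmul (binv x2) (bmul x2 Z) = Z" if "Z \<in> UT" for Z
    using that l by (simp add: bmul_assoc[symmetric] bmul_bone_left)
  have ZU: "bmul (bpow x1 n) (binv x2) \<in> UT" using bmul_UT[OF bpow_UT[OF XU] Ui] .
  show ?case using Suc c[OF ZU] by (simp add: y1_def bmul_assoc)
qed


lemma Q_facts: "bpow y1 n \<in> G" "bmul (bpow y1 n) x2 = bmul x2 (bpow x1 n)"
proof -
  have U: "x2 \<in> UT" using x2_G G_UT by blast
  have XU: "x1 \<in> UT" using x1_G G_UT by blast
  show "bpow y1 n \<in> G" unfolding y1_pow
    by (intro bmul_G x2_G bpow_G x1_G binv_G)
  have "bmul (bpow y1 n) x2 = bmul x2 (bmul (bpow x1 n) (bmul (binv x2) x2))"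
    unfolding y1_pow by (simp add: bmul_assoc)
  also have "\<dots> = bmul x2 (bpow x1 n)" using binv_left[OF U] bmul_bone_right[OF bpow_UT[OF XU]] by simp
  finally show "bmul (bpow y1 n) x2 = bmul x2 (bpow x1 n)" .
qed

theorem proposition4p6:
  shows "(\<forall>n::nat. n \<ge> 1 \<longrightarrow>
            isM (bpow x1 n) 0 [(23,224,138),(59,136,495)]
          \<or> isM (bpow x1 n) 0 [(23,224,138),(28,88,341)]
          \<or> (\<exists>r::nat. odd r \<and> r \<ge> 1 \<and> isM (bpow x1 n) (2 ^ r - 1) [(39,208,186),(0,0,0)])
          \<or> (\<exists>r::nat. even r \<and> r \<ge> 2 \<and> isM (bpow x1 n) (2 ^ r - 1) [(23,224,138),(0,0,0)]))
       \<and> (\<forall>n::nat. n \<ge> 1 \<longrightarrow>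
            isM (bpow y1 n) 0 [(23,224,138),(33,146,501)]
          \<or> isM (bpow y1 n) 0 [(23,224,138),(6,66,335)]
          \<or> (\<exists>r::nat. odd r \<and> r \<ge> 1 \<and> isM (bpow y1 n) (2 ^ r - 1) [(39,208,186),(0,106,247)])
          \<or> (\<exists>r::nat. even r \<and> r \<ge> 2 \<and> isM (bpow y1 n) (2 ^ r - 1) [(23,224,138),(26,26,26)]))"
proof (intro conjI allI impI)
  fix n :: nat assume n: "n \<ge> 1"
  have XG: "bpow x1 n \<in> G" by (rule bpow_G[OF x1_G])
  from x1_class[OF n]
  show "isM (bpow x1 n) 0 [(23,224,138),(59,136,495)]
          \<or> isM (bpow x1 n) 0 [(23,224,138),(28,88,341)]
          \<or> (\<exists>r::nat. odd r \<and> r \<ge> 1 \<and> isM (bpow x1 n) (2 ^ r - 1) [(39,208,186),(0,0,0)])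
          \<or> (\<exists>r::nat. even r \<and> r \<ge> 2 \<and> isM (bpow x1 n) (2 ^ r - 1) [(23,224,138),(0,0,0)])"
    using XG by (auto simp: isM2 has_diag_def pw)
next
  fix n :: nat assume n: "n \<ge> 1"
  define X where "X = bpow x1 n"
  define Q where "Q = bpow y1 n"
  have QG: "Q \<in> G" and e: "bmul Q x2 = bmul x2 X" using Q_facts by (simp_all add: Q_def X_def)
  have QU: "Q \<in> UT" using QG G_UT by blast
  have XU: "X \<in> UT" unfolding X_def using bpow_UT x1_G G_UT by blast
  have f1: "\<forall>r\<ge>1. pidx (r + (0 + 1)) = nxt (pidx r)" using pidx_Suc by (simp only: add_0) blast
  from x1_class[OF n, folded X_def]
  show "isM (bpow y1 n) 0 [(23,224,138),(33,146,501)]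
          \<or> isM (bpow y1 n) 0 [(23,224,138),(6,66,335)]
          \<or> (\<exists>r::nat. odd r \<and> r \<ge> 1 \<and> isM (bpow y1 n) (2 ^ r - 1) [(39,208,186),(0,106,247)])
          \<or> (\<exists>r::nat. even r \<and> r \<ge> 2 \<and> isM (bpow y1 n) (2 ^ r - 1) [(23,224,138),(26,26,26)])"
  proof (elim disjE exE conjE)
    assume z: "zl X 0" and d1: "\<forall>r\<ge>1. X r (r+1) = dblock (23,224,138) (pidx r)"
      and d2: "\<forall>r\<ge>1. X r (r+2) = dblock (59,136,495) (pidx r)"
    have "zl Q 0 \<and> (\<forall>r\<ge>1. Q r (r+(0+1)) = dblock (23,224,138) (pidx r))
     \<and> (\<forall>r\<ge>1. Q r (r+(0+2)) = dblock (59,136,495) (pidx r) + dblock (46,68,217) (pidx r) ** dblock (23,224,138) (nxt (pidx r))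
           + dblock (23,224,138) (pidx r) ** dblock (46,68,217) (nxt (pidx r)))"
    proof -
      have d1': "\<forall>r\<ge>1. X r (r+(0+1)) = dblock (23,224,138) (pidx r)" using d1 by simp
      have d2': "\<forall>r\<ge>1. X r (r+(0+2)) = dblock (59,136,495) (pidx r)" using d2 by simp
      show ?thesis by (rule y1_gen[OF QU XU e z d1' d2' f1])
    qed
    hence "isM Q 0 [(23,224,138),(33,146,501)]"
      using QG c6[OF pidx_range] by (simp add: isM2 has_diag_def)
    thus ?thesis unfolding Q_def by blast
  next
    assume z: "zl X 0" and d1: "\<forall>r\<ge>1. X r (r+1) = dblock (23,224,138) (pidx r)"
      and d2: "\<forall>r\<ge>1. X r (r+2) = dblock (28,88,341) (pidx r)"
    have "zl Q 0 \<and> (\<forall>r\<ge>1. Q r (r+(0+1)) = dblock (23,224,138) (pidx r))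
     \<and> (\<forall>r\<ge>1. Q r (r+(0+2)) = dblock (28,88,341) (pidx r) + dblock (46,68,217) (pidx r) ** dblock (23,224,138) (nxt (pidx r))
           + dblock (23,224,138) (pidx r) ** dblock (46,68,217) (nxt (pidx r)))"
    proof -
      have d1': "\<forall>r\<ge>1. X r (r+(0+1)) = dblock (23,224,138) (pidx r)" using d1 by simp
      have d2': "\<forall>r\<ge>1. X r (r+(0+2)) = dblock (28,88,341) (pidx r)" using d2 by simp
      show ?thesis by (rule y1_gen[OF QU XU e z d1' d2' f1])
    qed
    hence "isM Q 0 [(23,224,138),(6,66,335)]"
      using QG c7[OF pidx_range] by (simp add: isM2 has_diag_def)
    thus ?thesis unfolding Q_def by blast
  next
    fix k assume k: "odd k" "1 \<le> k" and z: "zl X (2^k-1)"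
      and d1: "\<forall>r\<ge>1. X r (r+2^k) = dblock (39,208,186) (pidx r)"
      and d2: "\<forall>r\<ge>1. X r (r+(2^k+1)) = dblock (0,0,0) (pidx r)"
    have f: "\<forall>r\<ge>1. pidx (r + (2^k-1+1)) = nxt (nxt (pidx r))" using pidx_pow2 k by (simp only: pw) simp
    have "zl Q (2^k-1) \<and> (\<forall>r\<ge>1. Q r (r+(2^k-1+1)) = dblock (39,208,186) (pidx r))
     \<and> (\<forall>r\<ge>1. Q r (r+(2^k-1+2)) = dblock (0,0,0) (pidx r) + dblock (46,68,217) (pidx r) ** dblock (39,208,186) (nxt (pidx r))
           + dblock (39,208,186) (pidx r) ** dblock (46,68,217) (nxt (nxt (pidx r))))"
    proof -
      have d1': "\<forall>r\<ge>1. X r (r+(2^k-1+1)) = dblock (39,208,186) (pidx r)" using d1 by (simp only: pw)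
      have d2': "\<forall>r\<ge>1. X r (r+(2^k-1+2)) = dblock (0,0,0) (pidx r)" using d2 by (simp only: pw)
      show ?thesis by (rule y1_gen[OF QU XU e z d1' d2' f])
    qed
    hence "isM Q (2^k-1) [(39,208,186),(0,106,247)]"
      using QG c8[OF pidx_range] by (simp add: isM2 has_diag_def pw)
    thus ?thesis using k unfolding Q_def by blast
  next
    fix k assume k: "even k" "2 \<le> k" and z: "zl X (2^k-1)"
      and d1: "\<forall>r\<ge>1. X r (r+2^k) = dblock (23,224,138) (pidx r)"
      and d2: "\<forall>r\<ge>1. X r (r+(2^k+1)) = dblock (0,0,0) (pidx r)"
    have f: "\<forall>r\<ge>1. pidx (r + (2^k-1+1)) = nxt (pidx r)" using pidx_pow2 k by (simp only: pw) simp
    have "zl Q (2^k-1) \<and> (\<forall>r\<ge>1. Q r (r+(2^k-1+1)) = dblock (23,224,138) (pidx r))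
     \<and> (\<forall>r\<ge>1. Q r (r+(2^k-1+2)) = dblock (0,0,0) (pidx r) + dblock (46,68,217) (pidx r) ** dblock (23,224,138) (nxt (pidx r))
           + dblock (23,224,138) (pidx r) ** dblock (46,68,217) (nxt (pidx r)))"
    proof -
      have d1': "\<forall>r\<ge>1. X r (r+(2^k-1+1)) = dblock (23,224,138) (pidx r)" using d1 by (simp only: pw)
      have d2': "\<forall>r\<ge>1. X r (r+(2^k-1+2)) = dblock (0,0,0) (pidx r)" using d2 by (simp only: pw)
      show ?thesis by (rule y1_gen[OF QU XU e z d1' d2' f])
    qed
    hence "isM Q (2^k-1) [(23,224,138),(26,26,26)]"
      using QG c9[OF pidx_range] by (simp add: isM2 has_diag_def pw)
    thus ?thesis using k unfolding Q_def by blast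
  qed
qed


end
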